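(* Let $H$ be a complex separable Hilbert space and let $\mathcal{G}$ be a countably infinite abelian group of unitary operators on $H$. Let $X = \{x_1,\dots,x_r\}$ and $Y = \{y_1,\dots,y_s\}$ be finite subsets of $H$ with $r < s$, let $V_0 = \overline{\mathrm{span}}\, \mathcal{G}(X)$ and $V_1 = \overline{\mathrm{span}}\, \mathcal{G}(Y)$, and assume $V_0 \subset V_1$. Let $W_0$ be a closed linear subspace of $V_1$ such that $V_0 + W_0 = V_1$ and $V_0 \cap W_0 = \{0\}$. Suppose that $\mathcal{G}(X)$ and $\mathcal{G}(Y)$ are frames for $V_0$ and $V_1$ respectively. Then there exists a finite subset $\Gamma = \{z_1,\dots,z_p\}$ of $W_0$ (for some positive integer $p$, not necessarily equal to $s-r$) such that $\mathcal{G}(\Gamma)$ is a frame for $W_0$ if and only if $g(W_0) \subseteq W_0$ for every $g \in \mathcal{G}$.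
   Context: For a finite set $S=\{v_1,\dots,v_k\}\subset H$, $\mathcal{G}(S)$ denotes the indexed family $\{g v_j : g \in \mathcal{G},\ j=1,\dots,k\}$. A countable indexed family $\{v_n\}_{n\in J}$ is a frame for its closed linear span $V$ if there are constants $0<A\le B$ with $A\|f\|^2 \le \sum_n |\langle f, v_n\rangle|^2 \le B\|f\|^2$ for all $f \in V$. *)

theory Defs
  imports "HOL-Analysis.Analysis"
begin

text \<open>HOL-Analysis only provides real inner product spaces,
so we introduce a type class of complex inner product spaces which are complete
(Banach) with respect to the norm induced by the complex inner product.
The inner product is linear in the first and conjugate linear in the second argument.\<close>

class chilbert_space = real_normed_vector + complete_space +
  fixes scaleC :: "complex \<Rightarrow> 'a \<Rightarrow> 'a" (infixr "*\<^sub>C" 75)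
    and cinner :: "'a \<Rightarrow> 'a \<Rightarrow> complex"
  assumes scaleC_add_right: "c *\<^sub>C (x + y) = c *\<^sub>C x + c *\<^sub>C y"
    and scaleC_add_left: "(c + d) *\<^sub>C x = c *\<^sub>C x + d *\<^sub>C x"
    and scaleC_scaleC: "c *\<^sub>C (d *\<^sub>C x) = (c * d) *\<^sub>C x"
    and scaleC_one: "1 *\<^sub>C x = x"
    and scaleR_scaleC: "scaleR r x = complex_of_real r *\<^sub>C x"
    and cinner_add_left: "cinner (x + y) z = cinner x z + cinner y z"
    and cinner_scaleC_left: "cinner (c *\<^sub>C x) y = c * cinner x y"
    and cinner_commute: "cinner x y = cnj (cinner y x)"
    and cinner_self_nonneg: "Im (cinner x x) = 0 \<and> Re (cinner x x) \<ge> 0"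
    and norm_eq_sqrt_cinner: "norm x = sqrt (Re (cinner x x))"

definition csubspace :: "'a::chilbert_space set \<Rightarrow> bool" where
  "csubspace V \<longleftrightarrow> 0 \<in> V \<and> (\<forall>x\<in>V. \<forall>y\<in>V. x + y \<in> V) \<and> (\<forall>c. \<forall>x\<in>V. c *\<^sub>C x \<in> V)"

definition cspan :: "'a::chilbert_space set \<Rightarrow> 'a set" where
  "cspan S = csubspace hull S"

definition closed_cspan :: "'a::chilbert_space set \<Rightarrow> 'a set" where
  "closed_cspan S = closure (cspan S)"

definition separable_space :: "'a::chilbert_space itself \<Rightarrow> bool" where
  "separable_space _ \<longleftrightarrow> (\<exists>D::'a set. countable D \<and> closure D = UNIV)"

definition clinear :: "('a::chilbert_space \<Rightarrow> 'a) \<Rightarrow> bool" where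
  "clinear f \<longleftrightarrow> (\<forall>x y. f (x + y) = f x + f y) \<and> (\<forall>c x. f (c *\<^sub>C x) = c *\<^sub>C f x)"

definition unitary :: "('a::chilbert_space \<Rightarrow> 'a) \<Rightarrow> bool" where
  "unitary U \<longleftrightarrow> clinear U \<and> bij U \<and> (\<forall>x y. cinner (U x) (U y) = cinner x y)"

definition abelian_unitary_group :: "('a::chilbert_space \<Rightarrow> 'a) set \<Rightarrow> bool" where
  "abelian_unitary_group G \<longleftrightarrow>
     (\<forall>g\<in>G. unitary g) \<and> id \<in> G \<and>
     (\<forall>g\<in>G. \<forall>h\<in>G. g \<circ> h \<in> G) \<and> (\<forall>g\<in>G. inv g \<in> G) \<and>
     (\<forall>g\<in>G. \<forall>h\<in>G. g \<circ> h = h \<circ> g)"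

text \<open>The indexed family G(S) = {g v_j : g in G, j = 1..k} for S = {v_1,...,v_k},
  indexed by G \<times> {1..k}.\<close>

definition orbit_index :: "('a \<Rightarrow> 'a) set \<Rightarrow> nat \<Rightarrow> (('a \<Rightarrow> 'a) \<times> nat) set" where
  "orbit_index G k = G \<times> {1..k}"

definition orbit_family :: "(nat \<Rightarrow> 'a) \<Rightarrow> ('a \<Rightarrow> 'a) \<times> nat \<Rightarrow> 'a" where
  "orbit_family v = (\<lambda>(g, j). g (v j))"

definition frame_for :: "'i set \<Rightarrow> ('i \<Rightarrow> 'a::chilbert_space) \<Rightarrow> 'a set \<Rightarrow> bool" where
  "frame_for J v V \<longleftrightarrow> countable J \<and> V = closed_cspan (v ` J) \<and>
     (\<exists>A B. 0 < A \<and> A \<le> B \<and>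
        (\<forall>f\<in>V. (\<lambda>n. (cmod (cinner f (v n)))\<^sup>2) summable_on J \<and>
               A * (norm f)\<^sup>2 \<le> (\<Sum>\<^sub>\<infinity>n\<in>J. (cmod (cinner f (v n)))\<^sup>2) \<and>
               (\<Sum>\<^sub>\<infinity>n\<in>J. (cmod (cinner f (v n)))\<^sup>2) \<le> B * (norm f)\<^sup>2))"

end

theory Submission
  imports Defs
begin


lemma scaleC_zero_left[simp]: "0 *\<^sub>C x = 0"
proof -
  have "0 *\<^sub>C x = scaleR 0 x" by (simp only: scaleR_scaleC of_real_0)
  thus ?thesis by simp
qed
lemma scaleC_zero_right[simp]: "c *\<^sub>C 0 = 0"
  using scaleC_add_right[of c 0 0] by simp
lemma scaleC_minus1: "(-1) *\<^sub>C x = - x"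
proof -
  have "(-1) *\<^sub>C x = scaleR (-1) x" by (simp only: scaleR_scaleC of_real_minus of_real_1)
  thus ?thesis by simp
qed
lemma scaleC_minus_right: "c *\<^sub>C (- x) = - (c *\<^sub>C x)"
proof -
  have "c *\<^sub>C (- x) = c *\<^sub>C ((-1) *\<^sub>C x)" by (simp only: scaleC_minus1)
  also have "\<dots> = ((-1) * c) *\<^sub>C x" by (simp only: scaleC_scaleC mult.commute)
  also have "\<dots> = (-1) *\<^sub>C (c *\<^sub>C x)" by (simp only: scaleC_scaleC)
  also have "\<dots> = - (c *\<^sub>C x)" by (rule scaleC_minus1)
  finally show ?thesis .
qed
lemma scaleC_diff_right: "c *\<^sub>C (x - y) = c *\<^sub>C x - c *\<^sub>C y"
  by (metis diff_conv_add_uminus scaleC_add_right scaleC_minus_right)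
lemma scaleC_minus_left: "(- c) *\<^sub>C x = - (c *\<^sub>C x)"
  by (metis mult_minus1 scaleC_minus1 scaleC_scaleC)
lemma scaleC_scaleR: "c *\<^sub>C (scaleR r x) = scaleR r (c *\<^sub>C x)"
  by (simp add: scaleR_scaleC scaleC_scaleC mult.commute)
lemma cinner_zero_left[simp]: "cinner 0 y = 0"
  using cinner_add_left[of 0 0 y] by simp
lemma cinner_minus_left: "cinner (- x) y = - cinner x y"
  by (metis add.right_inverse add_eq_0_iff cinner_add_left cinner_zero_left)
lemma cinner_diff_left: "cinner (x - z) y = cinner x y - cinner z y"
  by (metis cinner_add_left cinner_minus_left diff_conv_add_uminus uminus_add_conv_diff)
lemma cinner_add_right: "cinner x (y + z) = cinner x y + cinner x z"
  by (metis cinner_add_left cinner_commute complex_cnj_add)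
lemma cinner_zero_right[simp]: "cinner x 0 = 0"
  by (metis cinner_commute cinner_zero_left complex_cnj_zero)
lemma cinner_minus_right: "cinner x (- y) = - cinner x y"
  by (metis cinner_commute cinner_minus_left complex_cnj_minus)
lemma cinner_diff_right: "cinner x (y - z) = cinner x y - cinner x z"
  by (metis cinner_commute cinner_diff_left complex_cnj_diff)
lemma cinner_scaleC_right: "cinner x (c *\<^sub>C y) = cnj c * cinner x y"
  by (metis cinner_commute cinner_scaleC_left complex_cnj_mult)
lemma cinner_scaleR_left: "cinner (scaleR r x) y = of_real r * cinner x y"
  by (simp add: scaleR_scaleC cinner_scaleC_left)
lemma cinner_scaleR_right: "cinner x (scaleR r y) = of_real r * cinner x y"
  by (simp add: scaleR_scaleC cinner_scaleC_right)
lemma cinner_self: "cinner x x = complex_of_real ((norm x)\<^sup>2)"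
proof -
  have "Im (cinner x x) = 0" "Re (cinner x x) \<ge> 0" using cinner_self_nonneg by auto
  moreover have "(norm x)\<^sup>2 = Re (cinner x x)" using norm_eq_sqrt_cinner[of x] calculation by simp
  ultimately show ?thesis by (simp add: complex_eq_iff)
qed
lemma norm_scaleC: "norm (c *\<^sub>C x) = cmod c * norm x"
proof -
  have 1: "cinner (c *\<^sub>C x) (c *\<^sub>C x) = (c * cnj c) * cinner x x"
    unfolding cinner_scaleC_left cinner_scaleC_right by (simp add: mult_ac)
  have 2: "c * cnj c = complex_of_real ((cmod c)\<^sup>2)" by (rule complex_norm_square[symmetric])
  have "complex_of_real ((norm (c *\<^sub>C x))\<^sup>2) = complex_of_real ((cmod c)\<^sup>2) * complex_of_real ((norm x)\<^sup>2)"
    using 1 unfolding 2 cinner_self .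
  then have "complex_of_real ((norm (c *\<^sub>C x))\<^sup>2) = complex_of_real ((cmod c * norm x)\<^sup>2)"
    by (simp only: of_real_mult power_mult_distrib)
  then have "(norm (c *\<^sub>C x))\<^sup>2 = (cmod c * norm x)\<^sup>2" using of_real_eq_iff by blast
  then show ?thesis by (simp add: power2_eq_iff_nonneg)
qed

lemma norm_sub_proj:
  assumes "y \<noteq> 0"
  shows "(norm (x - (cinner x y / complex_of_real ((norm y)\<^sup>2)) *\<^sub>C y))\<^sup>2
          = (norm x)\<^sup>2 - (cmod (cinner x y))\<^sup>2 / (norm y)\<^sup>2"
proof -
  define a where "a = cinner x y"
  define n where "n = (norm y)\<^sup>2"
  have n: "n > 0" using assms by (simp add: n_def)
  define t where "t = a / complex_of_real n"
  have cy: "cinner y y = complex_of_real n" by (simp add: n_def cinner_self)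
  have cyx: "cinner y x = cnj a" by (simp add: a_def cinner_commute[of y x])
  have e1: "cinner (x - t *\<^sub>C y) (x - t *\<^sub>C y) = cinner x x - cnj t * a - t * cnj a + t * cnj t * complex_of_real n"
    unfolding cinner_diff_left cinner_diff_right cinner_scaleC_left cinner_scaleC_right cy cyx
    by (simp add: a_def algebra_simps)
  have aa: "a * cnj a = complex_of_real ((cmod a)\<^sup>2)" using complex_norm_square[of a] by simp
  have nz: "complex_of_real n \<noteq> 0" using n by simp
  have e2: "cnj t * a = complex_of_real ((cmod a)\<^sup>2 / n)" 
    using aa nz by (simp add: t_def mult.commute)
  have e3: "t * cnj a = complex_of_real ((cmod a)\<^sup>2 / n)" 
    using aa nz by (simp add: t_def)
  have e4: "t * cnj t * complex_of_real n = complex_of_real ((cmod a)\<^sup>2 / n)" 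
    using aa nz by (simp add: t_def)
  have "cinner (x - t *\<^sub>C y) (x - t *\<^sub>C y) = complex_of_real ((norm x)\<^sup>2 - (cmod a)\<^sup>2 / n)"
    unfolding e1 e2 e3 e4 cinner_self[of x] by simp
  then have "(norm (x - t *\<^sub>C y))\<^sup>2 = (norm x)\<^sup>2 - (cmod a)\<^sup>2 / n"
    unfolding cinner_self using of_real_eq_iff by blast
  then show ?thesis by (simp add: t_def a_def n_def)
qed

lemma cauchy_schwarz: "cmod (cinner x y) \<le> norm x * norm y"
proof (cases "y = 0")
  case True then show ?thesis by simp
next
  case False
  have n: "(norm y)\<^sup>2 > 0" using False by simp
  have "0 \<le> (norm x)\<^sup>2 - (cmod (cinner x y))\<^sup>2 / (norm y)\<^sup>2"
    using norm_sub_proj[OF False, of x] by (metis zero_le_power2)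
  then have "(cmod (cinner x y))\<^sup>2 \<le> (norm x)\<^sup>2 * (norm y)\<^sup>2" using n by (simp add: field_simps)
  then have "(cmod (cinner x y))\<^sup>2 \<le> (norm x * norm y)\<^sup>2" by (simp add: power_mult_distrib)
  then show ?thesis by (rule power2_le_imp_le) simp
qed

lemma parallelogram:
  fixes a b :: "'a::chilbert_space"
  shows "(norm (a + b))\<^sup>2 + (norm (a - b))\<^sup>2 = 2 * (norm a)\<^sup>2 + 2 * (norm b)\<^sup>2"
proof -
  have "cinner (a + b) (a + b) + cinner (a - b) (a - b) = 2 * cinner a a + 2 * cinner b b"
    by (simp add: cinner_add_left cinner_add_right cinner_diff_left cinner_diff_right algebra_simps)
  then have "complex_of_real ((norm (a + b))\<^sup>2 + (norm (a - b))\<^sup>2) = complex_of_real (2 * (norm a)\<^sup>2 + 2 * (norm b)\<^sup>2)"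
    unfolding cinner_self by simp
  then show ?thesis using of_real_eq_iff by blast
qed

section \<open>Bounded linear maps\<close>

lemma bl_cinner_left: "bounded_linear (\<lambda>v. cinner v u)"
proof (rule bounded_linear_intro[where K="norm u"])
  show "\<And>x y. cinner (x + y) u = cinner x u + cinner y u" by (rule cinner_add_left)
  show "\<And>r x. cinner (r *\<^sub>R x) u = r *\<^sub>R cinner x u" by (simp add: cinner_scaleR_left scaleR_conv_of_real)
  show "\<And>x. norm (cinner x u) \<le> norm x * norm u" by (rule cauchy_schwarz)
qed

lemma bl_cinner_right: "bounded_linear (\<lambda>v. cinner u v)"
proof (rule bounded_linear_intro[where K="norm u"])
  show "\<And>x y. cinner u (x + y) = cinner u x + cinner u y" by (rule cinner_add_right)
  show "\<And>r x. cinner u (r *\<^sub>R x) = r *\<^sub>R cinner u x" by (simp add: cinner_scaleR_right scaleR_conv_of_real)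
  show "\<And>x. norm (cinner u x) \<le> norm x * norm u" using cauchy_schwarz[of u] by (simp add: mult.commute)
qed

lemma bl_scaleC: "bounded_linear (\<lambda>x::'a::chilbert_space. c *\<^sub>C x)"
proof (rule bounded_linear_intro[where K="cmod c"])
  show "\<And>x y. c *\<^sub>C (x + y) = c *\<^sub>C x + c *\<^sub>C y" by (rule scaleC_add_right)
  show "\<And>r x. c *\<^sub>C (r *\<^sub>R x) = r *\<^sub>R (c *\<^sub>C x)" by (rule scaleC_scaleR)
  show "\<And>x. norm (c *\<^sub>C x) \<le> norm x * cmod c" by (simp add: norm_scaleC mult.commute)
qed

lemma unitary_norm: "unitary g \<Longrightarrow> norm (g x) = norm x"
proof -
  assume "unitary g"
  then have "cinner (g x) (g x) = cinner x x" by (simp add: unitary_def)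
  then have "(norm (g x))\<^sup>2 = (norm x)\<^sup>2" unfolding cinner_self using of_real_eq_iff by blast
  then show ?thesis by (simp add: power2_eq_iff_nonneg)
qed

lemma unitary_bl: "unitary g \<Longrightarrow> bounded_linear g"
proof -
  assume u: "unitary g"
  then have cl: "clinear g" by (simp add: unitary_def)
  show ?thesis
  proof (rule bounded_linear_intro[where K=1])
    show "\<And>x y. g (x + y) = g x + g y" using cl by (simp add: clinear_def)
    show "\<And>r x. g (r *\<^sub>R x) = r *\<^sub>R g x" using cl by (simp add: clinear_def scaleR_scaleC)
    show "\<And>x. norm (g x) \<le> norm x * 1" using unitary_norm[OF u] by simp
  qed
qed

section \<open>Subspaces\<close>

lemma csubspace_Inter: "(\<And>V. V \<in> T \<Longrightarrow> csubspace V) \<Longrightarrow> csubspace (\<Inter>T)"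
  by (simp add: csubspace_def)

lemma csubspace_cspan: "csubspace (cspan S)"
  unfolding cspan_def by (rule hull_in) (simp add: csubspace_Inter)

lemma cspan_superset: "S \<subseteq> cspan S"
  unfolding cspan_def by (rule hull_subset)

lemma cspan_minimal: "S \<subseteq> V \<Longrightarrow> csubspace V \<Longrightarrow> cspan S \<subseteq> V"
  unfolding cspan_def by (rule hull_minimal)

lemma csubspace_0: "csubspace V \<Longrightarrow> 0 \<in> V" by (simp add: csubspace_def)
lemma csubspace_add: "csubspace V \<Longrightarrow> x \<in> V \<Longrightarrow> y \<in> V \<Longrightarrow> x + y \<in> V" by (simp add: csubspace_def)
lemma csubspace_scaleC: "csubspace V \<Longrightarrow> x \<in> V \<Longrightarrow> c *\<^sub>C x \<in> V" by (simp add: csubspace_def)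
lemma csubspace_scaleR: "csubspace V \<Longrightarrow> x \<in> V \<Longrightarrow> r *\<^sub>R x \<in> V" by (simp add: csubspace_def scaleR_scaleC)
lemma csubspace_minus: "csubspace V \<Longrightarrow> x \<in> V \<Longrightarrow> - x \<in> V"
  by (metis csubspace_scaleC scaleC_minus1)
lemma csubspace_diff: "csubspace V \<Longrightarrow> x \<in> V \<Longrightarrow> y \<in> V \<Longrightarrow> x - y \<in> V"
  by (metis csubspace_add csubspace_minus diff_conv_add_uminus)

lemma csubspace_closure:
  assumes V: "csubspace V" shows "csubspace (closure V)"
  unfolding csubspace_def
proof (intro conjI ballI allI)
  show "0 \<in> closure V" using csubspace_0[OF V] closure_subset by blast
next
  fix x y assume "x \<in> closure V" "y \<in> closure V"
  then obtain a b where a: "\<forall>n. a n \<in> V" "a \<longlonglongrightarrow> x" and b: "\<forall>n. b n \<in> V" "b \<longlonglongrightarrow> y"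
    unfolding closure_sequential by blast
  have "(\<lambda>n. a n + b n) \<longlonglongrightarrow> x + y" using a b by (intro tendsto_add) auto
  moreover have "\<forall>n. a n + b n \<in> V" using a b csubspace_add[OF V] by blast
  ultimately show "x + y \<in> closure V" unfolding closure_sequential
    by (intro exI[where x="\<lambda>n. a n + b n"]) simp
next
  fix c x assume "x \<in> closure V"
  then obtain a where a: "\<forall>n. a n \<in> V" "a \<longlonglongrightarrow> x"
    unfolding closure_sequential by blast
  have "(\<lambda>n. c *\<^sub>C a n) \<longlonglongrightarrow> c *\<^sub>C x" using a bounded_linear.tendsto[OF bl_scaleC] by blast
  moreover have "\<forall>n. c *\<^sub>C a n \<in> V" using a csubspace_scaleC[OF V] by blast
  ultimately show "c *\<^sub>C x \<in> closure V" unfolding closure_sequential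
    by (intro exI[where x="\<lambda>n. c *\<^sub>C a n"]) simp
qed

lemma csubspace_closed_cspan: "csubspace (closed_cspan S)"
  unfolding closed_cspan_def by (intro csubspace_closure csubspace_cspan)

lemma closed_closed_cspan: "closed (closed_cspan S)"
  unfolding closed_cspan_def by simp

lemma closed_cspan_superset: "S \<subseteq> closed_cspan S"
  unfolding closed_cspan_def using cspan_superset closure_subset by blast

lemma closed_cspan_minimal: "S \<subseteq> V \<Longrightarrow> csubspace V \<Longrightarrow> closed V \<Longrightarrow> closed_cspan S \<subseteq> V"
  unfolding closed_cspan_def by (meson closure_minimal cspan_minimal)

lemma orth_closed_cspan:
  assumes "\<And>s. s \<in> S \<Longrightarrow> cinner s u = 0"
  shows "v \<in> closed_cspan S \<Longrightarrow> cinner v u = 0"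
proof -
  have sub: "csubspace {v. cinner v u = 0}"
    by (simp add: csubspace_def cinner_add_left cinner_scaleC_left)
  have cl: "closed {v. cinner v u = 0}"
    using bounded_linear.continuous_on[OF bl_cinner_left continuous_on_id]
    by (intro closed_Collect_eq) (auto intro: continuous_on_const)
  have "closed_cspan S \<subseteq> {v. cinner v u = 0}"
    by (rule closed_cspan_minimal[OF _ sub cl]) (use assms in auto)
  then show "v \<in> closed_cspan S \<Longrightarrow> cinner v u = 0" by blast
qed


lemma projection_exists:
  fixes M :: "'a::chilbert_space set"
  assumes M: "csubspace M" "closed M"
  shows "\<exists>l\<in>M. \<forall>w\<in>M. cinner w (y - l) = 0"
proof -
  define d where "d = Inf ((\<lambda>m. norm (y - m)) ` M)"
  have ne: "(\<lambda>m. norm (y - m)) ` M \<noteq> {}" using csubspace_0[OF M(1)] by blast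
  have bdd: "bdd_below ((\<lambda>m. norm (y - m)) ` M)" by (rule bdd_belowI[where m=0]) auto
  have dle: "d \<le> norm (y - w)" if "w \<in> M" for w
    unfolding d_def using bdd that by (intro cInf_lower) auto
  have d0: "0 \<le> d" unfolding d_def using ne by (intro cInf_greatest) auto
  have "\<exists>m\<in>M. (norm (y - m))\<^sup>2 < d\<^sup>2 + 1 / real (Suc n)" for n
  proof -
    have "d < sqrt (d\<^sup>2 + 1 / real (Suc n))"
      by (intro real_less_rsqrt) simp
    then obtain m where "m \<in> M" "norm (y - m) < sqrt (d\<^sup>2 + 1 / real (Suc n))"
      using cInf_lessD[OF ne] unfolding d_def by blast
    moreover have "(norm (y - m))\<^sup>2 < (sqrt (d\<^sup>2 + 1 / real (Suc n)))\<^sup>2"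
      using calculation(2) by (intro power_strict_mono) auto
    moreover have "(sqrt (d\<^sup>2 + 1 / real (Suc n)))\<^sup>2 = d\<^sup>2 + 1 / real (Suc n)"
      by (intro real_sqrt_pow2) simp
    ultimately show ?thesis by auto
  qed
  then obtain m where m: "\<And>n. m n \<in> M" "\<And>n. (norm (y - m n))\<^sup>2 < d\<^sup>2 + 1 / real (Suc n)"
    by metis
  have key: "(norm (m i - m j))\<^sup>2 \<le> 2 / real (Suc i) + 2 / real (Suc j)" for i j
  proof -
    have c: "scaleR (1/2) (m i + m j) \<in> M" using m(1) M(1) by (intro csubspace_scaleR csubspace_add) auto
    have "y - m i + (y - m j) = scaleR 2 (y - scaleR (1/2) (m i + m j))" by (simp add: algebra_simps scaleR_2)
    then have "norm (y - m i + (y - m j)) = 2 * norm (y - scaleR (1/2) (m i + m j))" by simp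
    then have "2 * d \<le> norm (y - m i + (y - m j))" using dle[OF c] by simp
    then have a: "4 * d\<^sup>2 \<le> (norm (y - m i + (y - m j)))\<^sup>2"
      using d0 by (metis mult_nonneg_nonneg power_mono power_mult_distrib zero_le_numeral numeral_times_numeral num_double power2_eq_square[of "2::real"] semiring_norm(12))
    have "y - m i - (y - m j) = m j - m i" by simp
    then have b: "(norm (y - m i - (y - m j)))\<^sup>2 = (norm (m i - m j))\<^sup>2" by (simp add: norm_minus_commute)
    show ?thesis using parallelogram[of "y - m i" "y - m j"] a b m(2)[of i] m(2)[of j] by simp
  qed
  have "Cauchy m"
  proof (rule CauchyI)
    fix e :: real assume e: "0 < e"
    obtain N :: nat where N: "4 / e\<^sup>2 < real N" using reals_Archimedean2 by blast
    show "\<exists>N. \<forall>i\<ge>N. \<forall>j\<ge>N. norm (m i - m j) < e"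
    proof (intro exI allI impI)
      fix i j assume ij: "N \<le> i" "N \<le> j"
      have e2: "0 < e\<^sup>2" using e by simp
      have "2 / real (Suc i) \<le> 2 / real (Suc N)" "2 / real (Suc j) \<le> 2 / real (Suc N)"
        using ij by (auto intro!: divide_left_mono)
      then have "(norm (m i - m j))\<^sup>2 \<le> 4 / real (Suc N)" using key[of i j] by simp
      also have "\<dots> < e\<^sup>2"
      proof -
        have "4 < e\<^sup>2 * real N" using N e2 by (simp add: field_simps)
        then have "4 < e\<^sup>2 * real (Suc N)" using e2 by (smt (verit) mult_left_mono of_nat_Suc)
        then show ?thesis by (simp add: field_simps)
      qed
      finally show "norm (m i - m j) < e" using e by (smt (verit) power_mono norm_ge_zero)
    qed
  qed
  then obtain l where l: "m \<longlonglongrightarrow> l" using Cauchy_convergent_iff convergent_def by blast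
  have lM: "l \<in> M" using closed_sequentially[OF M(2)] m(1) l by blast
  have lim1: "(\<lambda>n. (norm (y - m n))\<^sup>2) \<longlonglongrightarrow> (norm (y - l))\<^sup>2"
    by (intro tendsto_intros l)
  have lim2: "(\<lambda>n. d\<^sup>2 + 1 / real (Suc n)) \<longlonglongrightarrow> d\<^sup>2"
    using tendsto_add[OF tendsto_const LIMSEQ_inverse_real_of_nat] by (simp add: inverse_eq_divide)
  have ll: "(norm (y - l))\<^sup>2 \<le> d\<^sup>2"
    by (rule LIMSEQ_le[OF lim1 lim2]) (use m(2) less_imp_le in blast)
  show ?thesis
  proof (intro bexI[OF _ lM] ballI)
    fix w assume w: "w \<in> M"
    show "cinner w (y - l) = 0"
    proof (cases "w = 0")
      case True then show ?thesis by simp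
    next
      case False
      define u where "u = y - l"
      define t where "t = cinner u w / complex_of_real ((norm w)\<^sup>2)"
      have "l + t *\<^sub>C w \<in> M" using lM w M(1) by (intro csubspace_add csubspace_scaleC) auto
      then have "d \<le> norm (y - (l + t *\<^sub>C w))" by (rule dle)
      then have "d\<^sup>2 \<le> (norm (u - t *\<^sub>C w))\<^sup>2" using d0 by (simp add: u_def diff_diff_eq power_mono)
      then have "(norm u)\<^sup>2 \<le> (norm u)\<^sup>2 - (cmod (cinner u w))\<^sup>2 / (norm w)\<^sup>2"
        using norm_sub_proj[OF False, of u] ll unfolding t_def u_def by simp
      then have "(cmod (cinner u w))\<^sup>2 / (norm w)\<^sup>2 \<le> 0" by simp
      then have "cinner u w = 0" using False by (simp add: divide_le_0_iff)
      then show ?thesis by (metis u_def cinner_commute complex_cnj_zero)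
    qed
  qed
qed


lemma sigma_finite_nonneg:
  fixes f :: "'g \<times> 'j \<Rightarrow> real"
  assumes fin: "finite I" and nn: "\<And>x. 0 \<le> f x"
  shows "f summable_on (G \<times> I) \<longleftrightarrow> (\<lambda>g. \<Sum>j\<in>I. f (g,j)) summable_on G"
proof -
  have "f summable_on (G \<times> I) \<longleftrightarrow> ((\<lambda>x. norm (f x)) summable_on Sigma G (\<lambda>_. I))"
    by (rule summable_on_iff_abs_summable_on_real)
  also have "\<dots> \<longleftrightarrow> ((\<lambda>x. norm (infsum (\<lambda>y. norm (f (x, y))) I)) summable_on G)"
    using Infinite_Sum.abs_summable_on_Sigma_iff[where f=f and A=G and B="\<lambda>_. I"] fin by simp
  also have "\<dots> \<longleftrightarrow> ((\<lambda>g. norm (\<Sum>j\<in>I. f (g,j))) summable_on G)"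
  proof -
    have "infsum (\<lambda>y. norm (f (x, y))) I = (\<Sum>j\<in>I. f (x,j))" for x
      using fin by (simp add: nn abs_of_nonneg)
    then show ?thesis by simp
  qed
  also have "\<dots> \<longleftrightarrow> (\<lambda>g. \<Sum>j\<in>I. f (g,j)) summable_on G"
    by (rule summable_on_iff_abs_summable_on_real[symmetric])
  finally show ?thesis .
qed

lemma sigma_finite_infsum:
  fixes f :: "'g \<times> 'j \<Rightarrow> real"
  assumes fin: "finite I" and s: "f summable_on (G \<times> I)"
  shows "infsum f (G \<times> I) = infsum (\<lambda>g. \<Sum>j\<in>I. f (g,j)) G"
  using infsum_Sigma_banach[of f G "\<lambda>_. I"] s fin by simp

lemma dedup_sum:
  fixes h :: "'g \<Rightarrow> 'v \<Rightarrow> real" and p :: nat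
  assumes nn: "\<And>g v. 0 \<le> h g v" and fin: "finite I"
    and bij: "bij_betw z {1..p} (u ` I)"
    and summ: "(\<lambda>(g,j). h g (u j)) summable_on (G \<times> I)"
  shows "(\<lambda>(g,k). h g (z k)) summable_on (G \<times> {1..p})"
    and "infsum (\<lambda>(g,k). h g (z k)) (G \<times> {1..p}) \<le> infsum (\<lambda>(g,j). h g (u j)) (G \<times> I)"
    and "infsum (\<lambda>(g,j). h g (u j)) (G \<times> I) \<le> real (card I) * infsum (\<lambda>(g,k). h g (z k)) (G \<times> {1..p})"
proof -
  define S where "S g = (\<Sum>j\<in>I. h g (u j))" for g
  define T where "T g = (\<Sum>k\<in>{1..p}. h g (z k))" for g
  have T': "T g = (\<Sum>d\<in>u ` I. h g d)" for g
    unfolding T_def using sum.reindex_bij_betw[OF bij, of "h g"] by simp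
  have TS: "T g \<le> S g" for g
    unfolding T' S_def using sum_image_le[OF fin, of "h g" u] nn by (simp add: o_def)
  have ST: "S g \<le> real (card I) * T g" for g
    unfolding S_def
  proof (rule sum_bounded_above)
    fix j assume "j \<in> I"
    then show "h g (u j) \<le> T g" unfolding T' using nn fin
      by (intro member_le_sum) auto
  qed
  have T0: "0 \<le> T g" for g unfolding T_def using nn by (simp add: sum_nonneg)
  have Ss: "S summable_on G"
    using summ sigma_finite_nonneg[OF fin, of "\<lambda>(g,j). h g (u j)" G] nn unfolding S_def by auto
  have Ts: "T summable_on G"
    by (rule summable_on_comparison_test[OF Ss]) (use TS T0 in auto)
  show zs: "(\<lambda>(g,k). h g (z k)) summable_on (G \<times> {1..p})"
  proof -
    have nnc: "\<And>x. 0 \<le> (case x of (g, k) \<Rightarrow> h g (z k))" using nn by (simp split: prod.split)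
    show ?thesis
      using Ts sigma_finite_nonneg[where I="{1..p}" and f="\<lambda>(g,k). h g (z k)" and G=G, OF _ nnc] unfolding T_def by simp
  qed
  have eS: "infsum (\<lambda>(g,j). h g (u j)) (G \<times> I) = infsum S G"
    using sigma_finite_infsum[OF fin summ] unfolding S_def by simp
  have eT: "infsum (\<lambda>(g,k). h g (z k)) (G \<times> {1..p}) = infsum T G"
    using sigma_finite_infsum[OF _ zs] unfolding T_def by simp
  show "infsum (\<lambda>(g,k). h g (z k)) (G \<times> {1..p}) \<le> infsum (\<lambda>(g,j). h g (u j)) (G \<times> I)"
    unfolding eS eT using TS Ts Ss by (intro infsum_mono) auto
  have "infsum S G \<le> infsum (\<lambda>g. real (card I) * T g) G"
    using ST Ts Ss by (intro infsum_mono summable_on_cmult_right) auto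
  also have "\<dots> = real (card I) * infsum T G" by (rule infsum_cmult_right') 
  finally show "infsum (\<lambda>(g,j). h g (u j)) (G \<times> I) \<le> real (card I) * infsum (\<lambda>(g,k). h g (z k)) (G \<times> {1..p})"
    unfolding eS eT .
qed


lemma frame_dedup:
  fixes G :: "('a::chilbert_space \<Rightarrow> 'a) set" and u :: "nat \<Rightarrow> 'a" and s :: nat
  assumes fr: "frame_for (orbit_index G s) (orbit_family u) W" and s: "0 < s"
  shows "\<exists>p z. 0 < p \<and> inj_on z {1..p} \<and> z ` {1..p} = u ` {1..s} \<and>
           frame_for (orbit_index G p) (orbit_family z) W"
proof -
  define p where "p = card (u`{1..s})"
  obtain z where bij: "bij_betw z {1..p} (u ` {1..s})"
    unfolding p_def using ex_bij_betw_nat_finite_1 by blast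
  have p: "0 < p" using s by (simp add: p_def card_gt_0_iff)
  have inj: "inj_on z {1..p}" using bij bij_betw_imp_inj_on by blast
  have img: "z ` {1..p} = u ` {1..s}" using bij bij_betw_imp_surj_on by blast
  have sameimg: "orbit_family z ` orbit_index G p = orbit_family u ` orbit_index G s"
  proof
    show "orbit_family z ` orbit_index G p \<subseteq> orbit_family u ` orbit_index G s"
    proof
      fix v assume "v \<in> orbit_family z ` orbit_index G p"
      then obtain g k where gk: "g \<in> G" "k \<in> {1..p}" "v = g (z k)"
        by (auto simp: orbit_family_def orbit_index_def)
      then obtain j where j: "j \<in> {1..s}" "z k = u j" using img by blast
      have "(g,j) \<in> orbit_index G s" using gk j by (simp add: orbit_index_def)
      moreover have "v = orbit_family u (g,j)" using gk j by (simp add: orbit_family_def)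
      ultimately show "v \<in> orbit_family u ` orbit_index G s" by (rule rev_image_eqI)
    qed
  next
    show "orbit_family u ` orbit_index G s \<subseteq> orbit_family z ` orbit_index G p"
    proof
      fix v assume "v \<in> orbit_family u ` orbit_index G s"
      then obtain g j where gj: "g \<in> G" "j \<in> {1..s}" "v = g (u j)"
        by (auto simp: orbit_family_def orbit_index_def)
      then obtain k where k: "k \<in> {1..p}" "u j = z k" using img by (metis imageI imageE)
      have "(g,k) \<in> orbit_index G p" using gj k by (simp add: orbit_index_def)
      moreover have "v = orbit_family z (g,k)" using gj k by (simp add: orbit_family_def)
      ultimately show "v \<in> orbit_family z ` orbit_index G p" by (rule rev_image_eqI)
    qed
  qed
  from fr obtain A B where cG: "countable (G \<times> {1..s})" and W: "W = closed_cspan (orbit_family u ` orbit_index G s)"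
    and AB: "0 < A" "A \<le> B"
    and bnd: "\<And>f. f \<in> W \<Longrightarrow> (\<lambda>n. (cmod (cinner f (orbit_family u n)))\<^sup>2) summable_on (G \<times> {1..s}) \<and>
               A * (norm f)\<^sup>2 \<le> (\<Sum>\<^sub>\<infinity>n\<in>G \<times> {1..s}. (cmod (cinner f (orbit_family u n)))\<^sup>2) \<and>
               (\<Sum>\<^sub>\<infinity>n\<in>G \<times> {1..s}. (cmod (cinner f (orbit_family u n)))\<^sup>2) \<le> B * (norm f)\<^sup>2"
    unfolding frame_for_def orbit_index_def by blast
  have "G = fst ` (G \<times> {1..s})" using s by auto
  then have "countable G" using cG by (metis countable_image)
  then have cGp: "countable (G \<times> {1..p})" by simp
  have cs: "real (card {1..s}) = real s" by simp
  have sp: "real s > 0" using s by simp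
  have c1: "countable (orbit_index G p)" using cGp by (simp add: orbit_index_def)
  have c2: "W = closed_cspan (orbit_family z ` orbit_index G p)" using W sameimg by simp
  have c3: "0 < A / real s" using AB sp by simp
  have "A / real s \<le> A" using AB s by (simp add: divide_le_eq)
  then have c4: "A / real s \<le> B" using AB by simp
  have c5: "(\<lambda>n. (cmod (cinner f (orbit_family z n)))\<^sup>2) summable_on orbit_index G p \<and>
    A / real s * (norm f)\<^sup>2 \<le> (\<Sum>\<^sub>\<infinity>n\<in>orbit_index G p. (cmod (cinner f (orbit_family z n)))\<^sup>2) \<and>
    (\<Sum>\<^sub>\<infinity>n\<in>orbit_index G p. (cmod (cinner f (orbit_family z n)))\<^sup>2) \<le> B * (norm f)\<^sup>2"
    if f: "f \<in> W" for f
  proof (intro conjI)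
    define h where "h g v = (cmod (cinner f (g v)))\<^sup>2" for g :: "'a \<Rightarrow> 'a" and v
    have hu: "(\<lambda>n. (cmod (cinner f (orbit_family u n)))\<^sup>2) = (\<lambda>(g,j). h g (u j))"
      by (auto simp: fun_eq_iff orbit_family_def h_def)
    have hz: "(\<lambda>n. (cmod (cinner f (orbit_family z n)))\<^sup>2) = (\<lambda>(g,k). h g (z k))"
      by (auto simp: fun_eq_iff orbit_family_def h_def)
    have nn: "\<And>g v. 0 \<le> h g v" by (simp add: h_def)
    note b = bnd[OF f, unfolded hu]
    note d = dedup_sum[OF nn finite_atLeastAtMost bij conjunct1[OF b]]
    show "(\<lambda>n. (cmod (cinner f (orbit_family z n)))\<^sup>2) summable_on orbit_index G p"
      unfolding hz orbit_index_def by (rule d(1))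
    show "(\<Sum>\<^sub>\<infinity>n\<in>orbit_index G p. (cmod (cinner f (orbit_family z n)))\<^sup>2) \<le> B * (norm f)\<^sup>2"
      unfolding hz orbit_index_def using d(2) b by linarith
    have "A * (norm f)\<^sup>2 \<le> real s * (\<Sum>\<^sub>\<infinity>(g,k)\<in>G \<times> {1..p}. h g (z k))"
      using order_trans[OF conjunct1[OF conjunct2[OF b]] d(3)] cs by simp
    then show "A / real s * (norm f)\<^sup>2 \<le> (\<Sum>\<^sub>\<infinity>n\<in>orbit_index G p. (cmod (cinner f (orbit_family z n)))\<^sup>2)"
      unfolding hz orbit_index_def using sp by (simp add: field_simps)
  qed
  have "frame_for (orbit_index G p) (orbit_family z) W"
    unfolding frame_for_def using c1 c2 c3 c4 c5 by blast
  then show ?thesis using p inj img by blast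
qed


lemma unitary_diff: "unitary g \<Longrightarrow> g (a - b) = g a - g b"
  using unitary_bl linear_diff bounded_linear.linear by blast

lemma forward:
  fixes G :: "('a::chilbert_space \<Rightarrow> 'a) set"
  assumes AG: "abelian_unitary_group G" and g: "g \<in> G"
    and W: "W = closed_cspan (orbit_family z ` orbit_index G p)"
  shows "g ` W \<subseteq> W"
proof -
  define S where "S = orbit_family z ` orbit_index G p"
  have u: "unitary g" using AG g by (simp add: abelian_unitary_group_def)
  have bl: "bounded_linear g" using unitary_bl[OF u] .
  have cl: "clinear g" using u by (simp add: unitary_def)
  have gS: "g ` S \<subseteq> S"
  proof
    fix v assume "v \<in> g ` S"
    then obtain h k where hk: "h \<in> G" "k \<in> {1..p}" "v = g (h (z k))"
      by (auto simp: S_def orbit_family_def orbit_index_def)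
    have "g \<circ> h \<in> G" using AG g hk(1) by (simp add: abelian_unitary_group_def)
    then have "(g \<circ> h, k) \<in> orbit_index G p" using hk by (simp add: orbit_index_def)
    moreover have "v = orbit_family z (g \<circ> h, k)" using hk by (simp add: orbit_family_def)
    ultimately show "v \<in> S" unfolding S_def by (rule rev_image_eqI)
  qed
  have sub: "csubspace {v. g v \<in> cspan S}"
    using cl csubspace_cspan[of S] linear_0[OF bounded_linear.linear[OF bl]]
    by (simp add: csubspace_def clinear_def)
  have "cspan S \<subseteq> {v. g v \<in> cspan S}"
    by (rule cspan_minimal[OF _ sub]) (use gS cspan_superset in blast)
  then have "g ` cspan S \<subseteq> cspan S" by blast
  then have "g ` cspan S \<subseteq> closure (cspan S)" using closure_subset by blast
  then have "g ` closure (cspan S) \<subseteq> closure (cspan S)"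
    by (intro image_closure_subset linear_continuous_on bl) auto
  then show ?thesis unfolding W closed_cspan_def S_def .
qed

lemma backward:
  fixes G :: "('a::chilbert_space \<Rightarrow> 'a) set" and y :: "nat \<Rightarrow> 'a"
  assumes AG: "abelian_unitary_group G"
    and W0: "csubspace W0" "closed W0"
    and WV: "W0 \<subseteq> closed_cspan (orbit_family y ` orbit_index G s)"
    and fr: "frame_for (orbit_index G s) (orbit_family y) (closed_cspan (orbit_family y ` orbit_index G s))"
    and inv: "\<forall>g\<in>G. g ` W0 \<subseteq> W0"
  shows "\<exists>z0. z0 ` {1..s} \<subseteq> W0 \<and> frame_for (orbit_index G s) (orbit_family z0) W0"
proof -
  have "\<forall>j. \<exists>l\<in>W0. \<forall>w\<in>W0. cinner w (y j - l) = 0"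
    using projection_exists[OF W0] by blast
  then obtain z0 where z0: "\<And>j. z0 j \<in> W0" "\<And>j w. w \<in> W0 \<Longrightarrow> cinner w (y j - z0 j) = 0"
    by metis
  have same: "cinner f (g (z0 j)) = cinner f (g (y j))" if f: "f \<in> W0" and g: "g \<in> G" for f g j
  proof -
    have u: "unitary g" using AG g by (simp add: abelian_unitary_group_def)
    have ig: "inv g \<in> G" using AG g by (simp add: abelian_unitary_group_def)
    have bj: "bij g" using u by (simp add: unitary_def)
    have gi: "g (inv g f) = f" using bj by (simp add: bij_is_surj surj_f_inv_f)
    have hf: "inv g f \<in> W0" using inv ig f by blast
    have "cinner (inv g f) (y j - z0 j) = 0" using z0(2)[OF hf] .
    then have e: "cinner (inv g f) (z0 j) = cinner (inv g f) (y j)" by (simp add: cinner_diff_right)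
    have "cinner f (g (z0 j)) = cinner (g (inv g f)) (g (z0 j))" using gi by simp
    also have "\<dots> = cinner (inv g f) (z0 j)" using u by (simp add: unitary_def)
    also have "\<dots> = cinner (inv g f) (y j)" by (rule e)
    also have "\<dots> = cinner (g (inv g f)) (g (y j))" using u by (simp add: unitary_def)
    finally show ?thesis using gi by simp
  qed
  have sameo: "(cmod (cinner f (orbit_family z0 n)))\<^sup>2 = (cmod (cinner f (orbit_family y n)))\<^sup>2"
    if "f \<in> W0" "n \<in> orbit_index G s" for f n
    using that same by (auto simp: orbit_family_def orbit_index_def split: prod.split)
  from fr obtain A B where cI: "countable (orbit_index G s)"
    and AB: "0 < A" "A \<le> B"
    and bnd: "\<And>f. f \<in> closed_cspan (orbit_family y ` orbit_index G s) \<Longrightarrow>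
               (\<lambda>n. (cmod (cinner f (orbit_family y n)))\<^sup>2) summable_on (orbit_index G s) \<and>
               A * (norm f)\<^sup>2 \<le> (\<Sum>\<^sub>\<infinity>n\<in>orbit_index G s. (cmod (cinner f (orbit_family y n)))\<^sup>2) \<and>
               (\<Sum>\<^sub>\<infinity>n\<in>orbit_index G s. (cmod (cinner f (orbit_family y n)))\<^sup>2) \<le> B * (norm f)\<^sup>2"
    unfolding frame_for_def by blast
  have bnd': "(\<lambda>n. (cmod (cinner f (orbit_family z0 n)))\<^sup>2) summable_on (orbit_index G s) \<and>
               A * (norm f)\<^sup>2 \<le> (\<Sum>\<^sub>\<infinity>n\<in>orbit_index G s. (cmod (cinner f (orbit_family z0 n)))\<^sup>2) \<and>
               (\<Sum>\<^sub>\<infinity>n\<in>orbit_index G s. (cmod (cinner f (orbit_family z0 n)))\<^sup>2) \<le> B * (norm f)\<^sup>2"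
    if f: "f \<in> W0" for f
  proof -
    have e1: "(\<lambda>n. (cmod (cinner f (orbit_family z0 n)))\<^sup>2) summable_on (orbit_index G s) \<longleftrightarrow>
              (\<lambda>n. (cmod (cinner f (orbit_family y n)))\<^sup>2) summable_on (orbit_index G s)"
      by (rule summable_on_cong) (use sameo f in auto)
    have e2: "(\<Sum>\<^sub>\<infinity>n\<in>orbit_index G s. (cmod (cinner f (orbit_family z0 n)))\<^sup>2) =
              (\<Sum>\<^sub>\<infinity>n\<in>orbit_index G s. (cmod (cinner f (orbit_family y n)))\<^sup>2)"
      by (rule infsum_cong) (use sameo f in auto)
    show ?thesis unfolding e1 e2 using bnd WV f by blast
  qed
  define M where "M = closed_cspan (orbit_family z0 ` orbit_index G s)"
  have orbW: "orbit_family z0 ` orbit_index G s \<subseteq> W0"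
    using inv z0(1) by (auto simp: orbit_family_def orbit_index_def)
  have MW: "M \<subseteq> W0" unfolding M_def by (rule closed_cspan_minimal[OF orbW W0])
  have WM: "W0 \<subseteq> M"
  proof
    fix f assume f: "f \<in> W0"
    obtain l where l: "l \<in> M" "\<And>w. w \<in> M \<Longrightarrow> cinner w (f - l) = 0"
      using projection_exists[OF csubspace_closed_cspan closed_closed_cspan, of _ f] unfolding M_def by blast
    define v where "v = f - l"
    have vW: "v \<in> W0" unfolding v_def using f l(1) MW W0(1) csubspace_diff by blast
    have z: "(cmod (cinner v (orbit_family z0 n)))\<^sup>2 = 0" if "n \<in> orbit_index G s" for n
    proof -
      have "orbit_family z0 n \<in> M" using closed_cspan_superset imageI[OF that] unfolding M_def by (rule subsetD)
      then have "cinner (orbit_family z0 n) v = 0" using l(2) v_def by blast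
      then have "cinner v (orbit_family z0 n) = 0" by (metis cinner_commute complex_cnj_zero)
      then show ?thesis by simp
    qed
    have "(\<Sum>\<^sub>\<infinity>n\<in>orbit_index G s. (cmod (cinner v (orbit_family z0 n)))\<^sup>2) = 0"
      using z by (simp add: infsum_0)
    then have "A * (norm v)\<^sup>2 \<le> 0" using bnd'[OF vW] by simp
    then have "v = 0" using AB(1) by (simp add: mult_le_0_iff)
    then show "f \<in> M" using l(1) v_def by simp
  qed
  have "frame_for (orbit_index G s) (orbit_family z0) W0"
    unfolding frame_for_def
    using cI AB bnd' MW WM unfolding M_def by blast
  then show ?thesis using z0(1) by blast
qed

theorem theorem3p3:
  fixes G :: "('a::chilbert_space \<Rightarrow> 'a) set"
    and x y :: "nat \<Rightarrow> 'a" and r s :: nat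
    and W0 :: "'a set"
  assumes "separable_space TYPE('a)"
    and "abelian_unitary_group G" and "countable G" and "infinite G"
    and "inj_on x {1..r}" and "inj_on y {1..s}" and "r < s"
    and "closed_cspan (orbit_family x ` orbit_index G r)
           \<subseteq> closed_cspan (orbit_family y ` orbit_index G s)"
    and "csubspace W0" and "closed W0"
    and "W0 \<subseteq> closed_cspan (orbit_family y ` orbit_index G s)"
    and "{a + b | a b. a \<in> closed_cspan (orbit_family x ` orbit_index G r) \<and> b \<in> W0}
           = closed_cspan (orbit_family y ` orbit_index G s)"
    and "closed_cspan (orbit_family x ` orbit_index G r) \<inter> W0 = {0}"
    and "frame_for (orbit_index G r) (orbit_family x)
           (closed_cspan (orbit_family x ` orbit_index G r))"
    and "frame_for (orbit_index G s) (orbit_family y)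
           (closed_cspan (orbit_family y ` orbit_index G s))"
  shows "(\<exists>p::nat. \<exists>z::nat \<Rightarrow> 'a. 0 < p \<and> inj_on z {1..p} \<and> z ` {1..p} \<subseteq> W0 \<and>
            frame_for (orbit_index G p) (orbit_family z) W0)
         \<longleftrightarrow> (\<forall>g\<in>G. g ` W0 \<subseteq> W0)"
proof
  assume "\<exists>p::nat. \<exists>z::nat \<Rightarrow> 'a. 0 < p \<and> inj_on z {1..p} \<and> z ` {1..p} \<subseteq> W0 \<and>
            frame_for (orbit_index G p) (orbit_family z) W0"
  then obtain p z where fr: "frame_for (orbit_index G p) (orbit_family z) W0" by blast
  then have W: "W0 = closed_cspan (orbit_family z ` orbit_index G p)" by (simp add: frame_for_def)
  show "\<forall>g\<in>G. g ` W0 \<subseteq> W0"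
    using forward[OF assms(2) _ W] by blast
next
  assume inv: "\<forall>g\<in>G. g ` W0 \<subseteq> W0"
  obtain z0 where z0: "z0 ` {1..s} \<subseteq> W0" "frame_for (orbit_index G s) (orbit_family z0) W0"
    using backward[OF assms(2) assms(9) assms(10) assms(11) assms(15) inv] by blast
  have s: "0 < s" using assms(7) by simp
  obtain p z where pz: "0 < p" "inj_on z {1..p}" "z ` {1..p} = z0 ` {1..s}"
    "frame_for (orbit_index G p) (orbit_family z) W0"
    using frame_dedup[OF z0(2) s] by blast
  have "z ` {1..p} \<subseteq> W0" using pz(3) z0(1) by simp
  then show "\<exists>p::nat. \<exists>z::nat \<Rightarrow> 'a. 0 < p \<and> inj_on z {1..p} \<and> z ` {1..p} \<subseteq> W0 \<and>
            frame_for (orbit_index G p) (orbit_family z) W0"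
    using pz(1,2,4) by blast
qed

end
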